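(* Let $X$ be a real Banach lattice and $C\subseteq X$. If $\operatorname{so}(\overline{|C|})$ is norm closed, then $\overline{\operatorname{so}(C)}=\operatorname{so}(\overline{|C|})$, where $|C|=\{|x|:x\in C\}$ and bars denote norm closures.
   Context: $\operatorname{so}(S)$ is the set of all $z\in X$ for which there exists $x\in S$ with $|z|\le|x|$ (the smallest solid set containing $S$). *)

theory Defs
  imports "HOL-Analysis.Analysis"
begin

text \<open>A real Banach lattice: a type that is a real Banach space, an ordered real
vector space and a lattice (hence a Riesz space), whose norm is a lattice norm.\<close>

definition lat_abs :: "'a::{lattice, ab_group_add} \<Rightarrow> 'a" where
  "lat_abs x = sup x (- x)"

definition lattice_norm :: "'a::{banach, ordered_real_vector, lattice} itself \<Rightarrow> bool" where
  "lattice_norm _ \<longleftrightarrow> (\<forall>x y::'a. lat_abs x \<le> lat_abs y \<longrightarrow> norm x \<le> norm y)"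

definition solid_hull :: "'a::{lattice, ab_group_add} set \<Rightarrow> 'a set" where
  "solid_hull S = {z. \<exists>x\<in>S. lat_abs z \<le> lat_abs x}"

end

theory Submission
  imports Defs "HOL-Library.Lattice_Algebras"
begin

lemma sup_shift:
  fixes u v u' v' d :: "'a::{ordered_ab_group_add,lattice}"
  assumes "u \<le> u' + d" "v \<le> v' + d"
  shows "sup u v \<le> sup u' v' + d"
proof -
  have "u' + d \<le> sup u' v' + d" "v' + d \<le> sup u' v' + d" by (simp_all add: add_right_mono)
  thus ?thesis using assms by (meson order.trans sup_least)
qed

lemma inf_shift:
  fixes u v u' v' d :: "'a::{ordered_ab_group_add,lattice}"
  assumes "u \<le> u' + d" "v \<le> v' + d"
  shows "inf u v \<le> inf u' v' + d"
proof -
  have "inf u v - d \<le> u'" "inf u v - d \<le> v'"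
    using assms by (meson diff_le_eq order.trans inf_le1 inf_le2)+
  hence "inf u v - d \<le> inf u' v'" by (rule le_infI)
  thus ?thesis by (simp only: diff_le_eq)
qed

lemma neg_shift:
  fixes u u' d :: "'a::{ordered_ab_group_add,lattice}"
  assumes "u' \<le> u + d"
  shows "- u \<le> - u' + d"
  using assms by (metis add.commute add_uminus_conv_diff diff_le_eq le_diff_eq minus_add_cancel)

lemma abs_bound:
  fixes x y d :: "'a::{ordered_ab_group_add,lattice}"
  assumes "x \<le> y + d" "y \<le> x + d"
  shows "lat_abs (x - y) \<le> d"
  unfolding lat_abs_def using assms
  by (simp add: add.commute diff_le_eq)

lemma lag: "class.lattice_ab_group_add (+) (0::'a::{ordered_ab_group_add,lattice}) (-) uminus (\<le>) (<) inf sup"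
  unfolding class.lattice_ab_group_add_def
  by (intro conjI; unfold_locales)

lemma lat_abs_nonneg:
  fixes x :: "'a::{ordered_ab_group_add,lattice}"
  shows "0 \<le> lat_abs x"
proof -
  have "x + - x \<le> lat_abs x + lat_abs x" unfolding lat_abs_def
    by (intro add_mono) simp_all
  hence "0 \<le> lat_abs x + lat_abs x" by simp
  thus ?thesis using lattice_ab_group_add.zero_le_double_add_iff_zero_le_single_add[OF lag] by blast
qed

definition trunc :: "'a::{ordered_ab_group_add,lattice} \<Rightarrow> 'a \<Rightarrow> 'a" where
  "trunc z a = sup (inf z (lat_abs a)) (- lat_abs a)"

lemma lat_abs_shift:
  fixes a b :: "'a::{ordered_ab_group_add,lattice}"
  shows "lat_abs a \<le> lat_abs b + lat_abs (a - b)"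
proof -
  have 1: "a \<le> b + lat_abs (a - b)" unfolding lat_abs_def
    by (metis add.commute diff_le_eq sup_ge1)
  have 2: "b \<le> a + lat_abs (a - b)" unfolding lat_abs_def
    by (metis add.commute diff_le_eq minus_diff_eq sup_ge2)
  show ?thesis unfolding lat_abs_def[of a] lat_abs_def[of b]
    by (rule sup_shift[OF 1 neg_shift[OF 2]])
qed

lemma lat_abs_sym:
  fixes a b :: "'a::{ordered_ab_group_add,lattice}"
  shows "lat_abs (a - b) = lat_abs (b - a)"
  unfolding lat_abs_def by (simp add: sup_commute)

lemma trunc_close:
  fixes a b z :: "'a::{ordered_ab_group_add,lattice}"
  shows "lat_abs (trunc z a - trunc z b) \<le> lat_abs (a - b)"
proof -
  define d where "d = lat_abs (a - b)"
  have d0: "0 \<le> d" unfolding d_def by (rule lat_abs_nonneg)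
  have zz: "z \<le> z + d" using d0 by (simp add: add_increasing2)
  have A: "lat_abs a \<le> lat_abs b + d" unfolding d_def by (rule lat_abs_shift)
  have B: "lat_abs b \<le> lat_abs a + d" unfolding d_def using lat_abs_shift[of b a] lat_abs_sym[of a b] by simp
  have 1: "trunc z a \<le> trunc z b + d" unfolding trunc_def
    by (rule sup_shift[OF inf_shift[OF zz A] neg_shift[OF B]])
  have 2: "trunc z b \<le> trunc z a + d" unfolding trunc_def
    by (rule sup_shift[OF inf_shift[OF zz B] neg_shift[OF A]])
  show ?thesis using abs_bound[OF 1 2] d_def by simp
qed

lemma trunc_lip:
  fixes a b z :: "'a::{banach, ordered_real_vector, lattice}"
  assumes "lattice_norm TYPE('a)"
  shows "norm (trunc z a - trunc z b) \<le> norm (a - b)"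
  using assms trunc_close unfolding lattice_norm_def by blast

lemma trunc_small:
  fixes a z :: "'a::{ordered_ab_group_add,lattice}"
  shows "lat_abs (trunc z a) \<le> lat_abs a"
proof -
  have 0: "- lat_abs a \<le> lat_abs a" using lat_abs_nonneg[of a]
    by (meson neg_le_0_iff_le order.trans)
  have 1: "trunc z a \<le> lat_abs a" unfolding trunc_def using 0
    by (meson inf_le2 sup_least)
  have 2: "- lat_abs a \<le> trunc z a" unfolding trunc_def by simp
  show ?thesis unfolding lat_abs_def[of "trunc z a"] using 1 2
    by (metis lat_abs_def minus_le_iff sup_least)
qed

lemma trunc_fix:
  fixes y z :: "'a::{ordered_ab_group_add,lattice}"
  assumes "lat_abs z \<le> lat_abs y"
  shows "trunc z y = z"
proof -
  have 1: "z \<le> lat_abs y" "- z \<le> lat_abs y" using assms unfolding lat_abs_def[of z]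
    by (meson le_supE)+
  have "inf z (lat_abs y) = z" using 1 by (simp add: inf_absorb1)
  moreover have "- lat_abs y \<le> z" using 1 by (simp add: minus_le_iff)
  ultimately show ?thesis unfolding trunc_def by (simp add: sup_absorb1)
qed

lemma lat_abs_idem:
  fixes x :: "'a::{ordered_ab_group_add,lattice}"
  shows "lat_abs (lat_abs x) = lat_abs x"
proof -
  have "- lat_abs x \<le> lat_abs x" using lat_abs_nonneg[of x]
    by (meson neg_le_0_iff_le order.trans)
  thus ?thesis by (simp add: lat_abs_def[of "lat_abs x"] sup_absorb1)
qed

theorem mainTheorem11:
  fixes C :: "'a::{banach, ordered_real_vector, lattice} set"
  assumes "lattice_norm TYPE('a)"
    and "closed (solid_hull (closure (lat_abs ` C)))"
  shows "closure (solid_hull C) = solid_hull (closure (lat_abs ` C))"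
proof
  have "solid_hull C \<subseteq> solid_hull (closure (lat_abs ` C))"
  proof
    fix z assume "z \<in> solid_hull C"
    then obtain x where x: "x \<in> C" "lat_abs z \<le> lat_abs x" unfolding solid_hull_def by blast
    have "lat_abs x \<in> closure (lat_abs ` C)" using x(1) closure_subset by blast
    moreover have "lat_abs z \<le> lat_abs (lat_abs x)" using x(2) lat_abs_idem by metis
    ultimately show "z \<in> solid_hull (closure (lat_abs ` C))" unfolding solid_hull_def by blast
  qed
  thus "closure (solid_hull C) \<subseteq> solid_hull (closure (lat_abs ` C))"
    using assms(2) closure_minimal by blast
next
  show "solid_hull (closure (lat_abs ` C)) \<subseteq> closure (solid_hull C)"
  proof
    fix z assume "z \<in> solid_hull (closure (lat_abs ` C))"
    then obtain y where y: "y \<in> closure (lat_abs ` C)" "lat_abs z \<le> lat_abs y"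
      unfolding solid_hull_def by blast
    obtain s where s: "\<And>n. s n \<in> lat_abs ` C" "s \<longlonglongrightarrow> y"
      using y(1) unfolding closure_sequential by blast
    have mem: "trunc z (s n) \<in> solid_hull C" for n
    proof -
      obtain x where "x \<in> C" "s n = lat_abs x" using s(1) by blast
      thus ?thesis using trunc_small[of z "s n"] lat_abs_idem[of x] unfolding solid_hull_def by auto
    qed
    have "(\<lambda>n. trunc z (s n)) \<longlonglongrightarrow> trunc z y"
    proof (rule LIMSEQ_I)
      fix r :: real assume "0 < r"
      then obtain N where N: "\<forall>n\<ge>N. norm (s n - y) < r" using LIMSEQ_D[OF s(2)] by blast
      show "\<exists>N. \<forall>n\<ge>N. norm (trunc z (s n) - trunc z y) < r"
        using N trunc_lip[OF assms(1)] by (meson order.strict_trans1)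
    qed
    hence "(\<lambda>n. trunc z (s n)) \<longlonglongrightarrow> z" using trunc_fix[OF y(2)] by simp
    thus "z \<in> closure (solid_hull C)" unfolding closure_sequential using mem by (intro exI[of _ "\<lambda>n. trunc z (s n)"]) blast
  qed
qed

end
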